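(* Let $\tau$ be a face of the positive cone in $\mathbb R^n$ of dimension $t$ with $0<t\le n-1$, let $1\le p,q<\infty$, and equip $\mathbb R^n$ and $\mathbb R^{n-t}\cong\mathbb R^n/\mathbb R\tau$ with Lebesgue measure. Let $M$ be a cubically encoded persistence module over $\mathbb R^n$. If $\|M\|_p<\infty$, then $\|M/\tau\|_q=0$.
   Context: Persistence modules are functors from $\mathbb R^n$ (product order) to finite-dimensional vector spaces over a field. $M$ is cubically encoded if $M\cong M'\circ e$ for an order-preserving map $e\colon\mathbb R^n\to\mathcal P$ to a finite poset whose fibers are finite unions of cubes (products of intervals of $\mathbb R$). A face of the positive cone is $\tau=\{\sum_i a_ie_{j_i}: a_i\ge0\}$ for a set of standard basis vectors $e_{j_1},\dots,e_{j_t}$; $\mathbb R^n/\mathbb R\tau$ is identified with $\mathbb R^{n-t}$ via the remaining coordinates. The quotient restriction $M/\tau$ is the $\mathbb R^n/\mathbb R\tau$-module with $(M/\tau)_{w+\mathbb R\tau}=\varinjlim_{u\in w+\tau}M_u$, with induced structure maps. The $L^p$-Hilbert amplitude is $\|M\|_p=(\int\dim M(x)^p\,d\lambda(x))^{1/p}$, $\lambda$ Lebesgue measure. *)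

theory Defs
  imports "HOL-Analysis.Analysis"
begin

text \<open>Vector spaces over a field \<open>'k\<close> are subspaces of a common ambient
  \<open>'k\<close>-vector space \<open>'v\<close> with scalar multiplication \<open>s\<close>.
  The ambient \<open>\<real>^n\<close> is \<open>'n \<Rightarrow> real\<close> for a finite index type \<open>'n\<close>
  (so n = CARD('n)), ordered by the product (pointwise) order.\<close>

definition fin_dim_subspace :: "('k::field \<Rightarrow> 'v::ab_group_add \<Rightarrow> 'v) \<Rightarrow> 'v set \<Rightarrow> bool" where
  "fin_dim_subspace s W \<longleftrightarrow> module.subspace s W \<and>
     (\<exists>B. finite B \<and> B \<subseteq> W \<and> module.span s B = W)"

definition lin_on :: "('k::field \<Rightarrow> 'v::ab_group_add \<Rightarrow> 'v) \<Rightarrow> 'v set \<Rightarrow> ('v \<Rightarrow> 'v) \<Rightarrow> bool" where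
  "lin_on s W g \<longleftrightarrow> (\<forall>a\<in>W. \<forall>b\<in>W. g (a + b) = g a + g b) \<and> (\<forall>c. \<forall>a\<in>W. g (s c a) = s c (g a))"

definition pers_module ::
  "('k::field \<Rightarrow> 'v::ab_group_add \<Rightarrow> 'v) \<Rightarrow> 'i set \<Rightarrow> ('i \<Rightarrow> 'i \<Rightarrow> bool) \<Rightarrow>
   ('i \<Rightarrow> 'v set) \<Rightarrow> ('i \<Rightarrow> 'i \<Rightarrow> 'v \<Rightarrow> 'v) \<Rightarrow> bool" where
  "pers_module s I le V f \<longleftrightarrow>
     (\<forall>x\<in>I. fin_dim_subspace s (V x)) \<and>
     (\<forall>x\<in>I. \<forall>y\<in>I. le x y \<longrightarrow> lin_on s (V x) (f x y) \<and> f x y ` V x \<subseteq> V y) \<and>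
     (\<forall>x\<in>I. \<forall>v\<in>V x. f x x v = v) \<and>
     (\<forall>x\<in>I. \<forall>y\<in>I. \<forall>z\<in>I. le x y \<longrightarrow> le y z \<longrightarrow> (\<forall>v\<in>V x. f y z (f x y v) = f x z v))"

abbreviation Rn_module ::
  "('k::field \<Rightarrow> 'v::ab_group_add \<Rightarrow> 'v) \<Rightarrow> (('n::finite \<Rightarrow> real) \<Rightarrow> 'v set) \<Rightarrow>
   (('n \<Rightarrow> real) \<Rightarrow> ('n \<Rightarrow> real) \<Rightarrow> 'v \<Rightarrow> 'v) \<Rightarrow> bool" where
  "Rn_module s V f \<equiv> pers_module s UNIV (\<le>) V f"

definition finite_poset :: "nat set \<Rightarrow> (nat \<Rightarrow> nat \<Rightarrow> bool) \<Rightarrow> bool" where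
  "finite_poset P le \<longleftrightarrow> finite P \<and> (\<forall>a\<in>P. le a a) \<and>
     (\<forall>a\<in>P. \<forall>b\<in>P. le a b \<longrightarrow> le b a \<longrightarrow> a = b) \<and>
     (\<forall>a\<in>P. \<forall>b\<in>P. \<forall>c\<in>P. le a b \<longrightarrow> le b c \<longrightarrow> le a c)"

definition cube :: "('n \<Rightarrow> real) set \<Rightarrow> bool" where
  "cube C \<longleftrightarrow> (\<exists>I::'n \<Rightarrow> real set. (\<forall>i. is_interval (I i)) \<and> C = {x. \<forall>i. x i \<in> I i})"

definition finite_union_of_cubes :: "('n \<Rightarrow> real) set \<Rightarrow> bool" where
  "finite_union_of_cubes A \<longleftrightarrow> (\<exists>\<C>. finite \<C> \<and> (\<forall>C\<in>\<C>. cube C) \<and> A = \<Union>\<C>)"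

text \<open>Cubically encoded: \<open>M \<cong> M' \<circ> e\<close> with \<open>e\<close> order preserving into a finite poset
  (realised on a finite subset of \<open>nat\<close>), fibres finite unions of cubes, and a natural
  isomorphism \<open>\<phi>\<close> (pointwise linear bijections commuting with structure maps).\<close>
definition cubically_encoded ::
  "('k::field \<Rightarrow> 'v::ab_group_add \<Rightarrow> 'v) \<Rightarrow> (('n::finite \<Rightarrow> real) \<Rightarrow> 'v set) \<Rightarrow>
   (('n \<Rightarrow> real) \<Rightarrow> ('n \<Rightarrow> real) \<Rightarrow> 'v \<Rightarrow> 'v) \<Rightarrow> bool" where
  "cubically_encoded s V f \<longleftrightarrow>
    (\<exists>P le e V' g \<phi>.
       finite_poset P le \<and>
       (\<forall>x. e x \<in> P) \<and> (\<forall>x y. x \<le> y \<longrightarrow> le (e x) (e y)) \<and>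
       (\<forall>p\<in>P. finite_union_of_cubes {x. e x = p}) \<and>
       pers_module s P le V' g \<and>
       (\<forall>x. lin_on s (V x) (\<phi> x) \<and> bij_betw (\<phi> x) (V x) (V' (e x))) \<and>
       (\<forall>x y. x \<le> y \<longrightarrow> (\<forall>v\<in>V x. \<phi> y (f x y v) = g (e x) (e y) (\<phi> x v))))"

text \<open>Dimension of the directed colimit of \<open>V\<close> over a directed set \<open>U\<close>, unfolded:
  elements of the colimit are classes of pairs \<open>(u,v)\<close>, \<open>v \<in> V u\<close>, and a linear combination
  of classes vanishes iff the combination of the images at some common upper bound in \<open>U\<close> vanishes.\<close>
definition colim_indep ::
  "('k::field \<Rightarrow> 'v::ab_group_add \<Rightarrow> 'v) \<Rightarrow> ('i::order \<Rightarrow> 'v set) \<Rightarrow> ('i \<Rightarrow> 'i \<Rightarrow> 'v \<Rightarrow> 'v) \<Rightarrow>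
   'i set \<Rightarrow> (nat \<Rightarrow> 'i \<times> 'v) \<Rightarrow> nat \<Rightarrow> bool" where
  "colim_indep s V f U F m \<longleftrightarrow>
     (\<forall>i<m. fst (F i) \<in> U \<and> snd (F i) \<in> V (fst (F i))) \<and>
     (\<forall>c::nat \<Rightarrow> 'k.
        (\<exists>w\<in>U. (\<forall>i<m. fst (F i) \<le> w) \<and>
               (\<Sum>i<m. s (c i) (f (fst (F i)) w (snd (F i)))) = 0)
        \<longrightarrow> (\<forall>i<m. c i = 0))"

definition colim_dim ::
  "('k::field \<Rightarrow> 'v::ab_group_add \<Rightarrow> 'v) \<Rightarrow> ('i::order \<Rightarrow> 'v set) \<Rightarrow> ('i \<Rightarrow> 'i \<Rightarrow> 'v \<Rightarrow> 'v) \<Rightarrow>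
   'i set \<Rightarrow> enat" where
  "colim_dim s V f U = Sup {enat m | m. \<exists>F. colim_indep s V f U F m}"

text \<open>Face \<open>\<tau>\<close> spanned by \<open>e_j, j \<in> J\<close>; \<open>\<real>^n/\<real>\<tau>\<close> is identified with functions on the
  remaining coordinates \<open>-J\<close>. For such \<open>y\<close>, \<open>w + \<tau>\<close> with \<open>w\<close> the representative of \<open>y\<close>
  that is \<open>0\<close> on \<open>J\<close>.\<close>
definition coset_face :: "'n set \<Rightarrow> ('n \<Rightarrow> real) \<Rightarrow> ('n \<Rightarrow> real) set" where
  "coset_face J y = {u. (\<forall>i. i \<notin> J \<longrightarrow> u i = y i) \<and> (\<forall>j\<in>J. 0 \<le> u j)}"

definition quot_restr_dim ::
  "('k::field \<Rightarrow> 'v::ab_group_add \<Rightarrow> 'v) \<Rightarrow> (('n \<Rightarrow> real) \<Rightarrow> 'v set) \<Rightarrow>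
   (('n \<Rightarrow> real) \<Rightarrow> ('n \<Rightarrow> real) \<Rightarrow> 'v \<Rightarrow> 'v) \<Rightarrow> 'n set \<Rightarrow> ('n \<Rightarrow> real) \<Rightarrow> enat" where
  "quot_restr_dim s V f J y = colim_dim s V f (coset_face J y)"

definition ennreal_root :: "real \<Rightarrow> ennreal \<Rightarrow> ennreal" where
  "ennreal_root p a = (if a = top then top else ennreal (enn2real a powr (1 / p)))"

definition enat_powr :: "enat \<Rightarrow> real \<Rightarrow> ennreal" where
  "enat_powr d p = (case d of enat k \<Rightarrow> ennreal (real k powr p) | \<infinity> \<Rightarrow> top)"

definition lebesgue_on_coords :: "'n set \<Rightarrow> ('n \<Rightarrow> real) measure" where
  "lebesgue_on_coords A = completion (PiM A (\<lambda>_. lborel))"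

definition Lp_amplitude :: "real \<Rightarrow> 'n set \<Rightarrow> (('n \<Rightarrow> real) \<Rightarrow> enat) \<Rightarrow> ennreal" where
  "Lp_amplitude p A d = ennreal_root p (\<integral>\<^sup>+ x. enat_powr (d x) p \<partial>lebesgue_on_coords A)"

definition hilbert_norm ::
  "real \<Rightarrow> ('k::field \<Rightarrow> 'v::ab_group_add \<Rightarrow> 'v) \<Rightarrow> (('n::finite \<Rightarrow> real) \<Rightarrow> 'v set) \<Rightarrow> ennreal" where
  "hilbert_norm p s V = Lp_amplitude p UNIV (\<lambda>x. enat (vector_space.dim s (V x)))"

definition quot_hilbert_norm ::
  "real \<Rightarrow> ('k::field \<Rightarrow> 'v::ab_group_add \<Rightarrow> 'v) \<Rightarrow> (('n::finite \<Rightarrow> real) \<Rightarrow> 'v set) \<Rightarrow>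
   (('n \<Rightarrow> real) \<Rightarrow> ('n \<Rightarrow> real) \<Rightarrow> 'v \<Rightarrow> 'v) \<Rightarrow> 'n set \<Rightarrow> ennreal" where
  "quot_hilbert_norm q s V f J = Lp_amplitude q (- J) (quot_restr_dim s V f J)"

end

theory Submission
  imports Defs
begin

lemma interval_inf_measure:
  assumes iv: "is_interval (S::real set)" and inf: "infinite {k::nat. real k \<in> S}"
  shows "emeasure lborel S = \<infinity>"
proof -
  have Sb: "S \<in> sets borel" using real_interval_borel_measurable[OF iv] .
  have "{k::nat. real k \<in> S} \<noteq> {}" using inf by (metis finite.emptyI)
  then obtain k0 where k0: "real k0 \<in> S" by blast
  have ge: "ennreal (real N) \<le> emeasure lborel S" for N
  proof -
    obtain k where k: "k \<in> {k::nat. real k \<in> S}" "k0 + N \<le> k"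
      using inf unfolding infinite_nat_iff_unbounded_le by blast
    have kS: "real k \<in> S" using k(1) by simp
    have sub: "{real k0..real k} \<subseteq> S"
    proof
      fix x assume "x \<in> {real k0..real k}"
      then have "real k0 \<le> x" "x \<le> real k" by simp_all
      then show "x \<in> S" using iv k0 kS unfolding is_interval_1 by blast
    qed
    have "real N \<le> real k - real k0" using k(2) by simp
    then have "ennreal (real N) \<le> ennreal (real k - real k0)" by (rule ennreal_leI)
    also have "\<dots> = emeasure lborel {real k0..real k}"
      by (rule emeasure_lborel_Icc[symmetric]) (use k(2) in simp)
    also have "\<dots> \<le> emeasure lborel S" by (rule emeasure_mono[OF sub]) (simp add: Sb)
    finally show ?thesis .
  qed
  show ?thesis
  proof (rule ccontr)
    assume ninf: "emeasure lborel S \<noteq> \<infinity>"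
    obtain r where r: "emeasure lborel S = ennreal r" "0 \<le> r"
    proof (cases "emeasure lborel S" rule: ennreal_cases)
      case (real r)
      then show ?thesis using that by blast
    next
      case top
      then show ?thesis using ninf by (simp add: infinity_ennreal_def)
    qed
    have "ennreal (real (nat (ceiling r) + 1)) \<le> ennreal r" using ge[of "nat (ceiling r) + 1"] r(1) by simp
    then have "real (nat (ceiling r) + 1) \<le> r" using r(2) by (simp only: ennreal_le_iff)
    then show False by linarith
  qed
qed

lemma box_emeasure:
  fixes I :: "'n::finite \<Rightarrow> real set"
  assumes "\<And>i. is_interval (I i)"
  shows "emeasure (PiM A (\<lambda>_. lborel)) (PiE A I) = (\<Prod>i\<in>A. emeasure lborel (I i))"
proof -
  interpret product_sigma_finite "\<lambda>_. lborel :: real measure" by standard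
  show ?thesis using assms real_interval_borel_measurable by (intro emeasure_PiM) auto
qed
lemma nz_dim:
  assumes vs: "vector_space s" and fd: "fin_dim_subspace s W" and z: "z \<in> W" "z \<noteq> 0"
  shows "1 \<le> vector_space.dim s W"
proof (rule ccontr)
  interpret vs: vector_space s by (rule vs)
  assume "\<not> 1 \<le> vs.dim W"
  then have d0: "vs.dim W = 0" by simp
  obtain T where T: "finite T" "T \<subseteq> W" "vs.span T = W" using fd unfolding fin_dim_subspace_def by blast
  obtain B where B: "B \<subseteq> W" "vs.independent B" "W \<subseteq> vs.span B" "card B = vs.dim W"
    by (rule vs.basis_exists)
  have "B \<subseteq> vs.span T" using B(1) T(3) by simp
  from vs.independent_span_bound[OF T(1) B(2) this] have "finite B" by (rule conjunct1)
  then have "B = {}" using B(4) d0 by simp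
  then have "W \<subseteq> {0}" using B(3) by simp
  then show False using z by blast
qed

lemma lin0:
  fixes g :: "'v::ab_group_add \<Rightarrow> 'v"
  assumes "lin_on s W g" "0 \<in> W"
  shows "g 0 = 0"
proof -
  have "g (0 + 0) = g 0 + g 0" using assms unfolding lin_on_def by blast
  then show ?thesis by simp
qed

theorem mainTheorem16:
  fixes s :: "'k::field \<Rightarrow> 'v::ab_group_add \<Rightarrow> 'v"
    and V :: "('n::finite \<Rightarrow> real) \<Rightarrow> 'v set"
    and f :: "('n \<Rightarrow> real) \<Rightarrow> ('n \<Rightarrow> real) \<Rightarrow> 'v \<Rightarrow> 'v"
    and J :: "'n set" and p q :: real
  assumes "vector_space s"
    and "0 < card J" and "card J \<le> CARD('n) - 1"
    and "1 \<le> p" and "1 \<le> q"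
    and "Rn_module s V f"
    and "cubically_encoded s V f"
    and "hilbert_norm p s V < top"
  shows "quot_hilbert_norm q s V f J = 0"
proof -
  interpret vs: vector_space s by fact
  have Jne: "J \<noteq> {}" using assms(2) by auto
  from assms(7) obtain P le e V' \<phi> where
    fp: "finite_poset P le" and eP: "\<forall>x. e x \<in> P"
    and fib: "\<forall>p\<in>P. finite_union_of_cubes {x. e x = p}"
    and iso: "\<forall>x. lin_on s (V x) (\<phi> x) \<and> bij_betw (\<phi> x) (V x) (V' (e x))"
    unfolding cubically_encoded_def by (elim exE conjE) blast
  from fib obtain Cs where Cs: "\<forall>p\<in>P. finite (Cs p) \<and> (\<forall>C\<in>Cs p. cube C) \<and> {x. e x = p} = \<Union>(Cs p)"
    unfolding finite_union_of_cubes_def by metis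
  define \<A> where "\<A> = \<Union> (Cs ` P)"
  have finA: "finite \<A>" using fp Cs unfolding finite_poset_def \<A>_def by auto
  have pm: "pers_module s UNIV (\<le>) V f" using assms(6) .
  have fdV0: "\<forall>x\<in>UNIV. fin_dim_subspace s (V x)" using pm unfolding pers_module_def by (rule conjunct1)
  have fdV: "fin_dim_subspace s (V x)" for x using fdV0 by simp
  have zero_in: "0 \<in> V x" for x
  proof -
    have "vs.subspace (V x)" using fdV[of x] unfolding fin_dim_subspace_def by (rule conjunct1)
    then show ?thesis by (rule vs.subspace_0)
  qed
  define allnz where "allnz C \<longleftrightarrow> (\<forall>x\<in>C. \<exists>z\<in>V x. z \<noteq> 0)" for C
  have spread: "allnz C" if C: "C \<in> \<A>" and w: "w \<in> C" and z: "z \<in> V w" "z \<noteq> 0" for C w z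
  proof -
    obtain p where p: "p \<in> P" "C \<in> Cs p" using C unfolding \<A>_def by blast
    have eC: "e x = p" if "x \<in> C" for x using Cs p that by blast
    have bw: "bij_betw (\<phi> w) (V w) (V' (e w))" using iso by blast
    have "\<phi> w z \<in> V' (e w)" using bij_betwE[OF bw] z(1) by blast
    then have "\<phi> w z \<in> V' p" using eC[OF w] by simp
    moreover have "\<phi> w z \<noteq> 0"
    proof
      assume a0: "\<phi> w z = 0"
      have "lin_on s (V w) (\<phi> w)" using iso by blast
      then have "\<phi> w 0 = 0" using lin0 zero_in by blast
      then have "\<phi> w z = \<phi> w 0" using a0 by simp
      then have "z = 0" using bij_betw_imp_inj_on[OF bw] z(1) zero_in inj_onD by metis
      then show False using z(2) by simp
    qed
    ultimately show ?thesis unfolding allnz_def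
    proof (intro ballI)
      fix x assume x: "x \<in> C"
      assume a: "\<phi> w z \<in> V' p" "\<phi> w z \<noteq> 0"
      have bx: "bij_betw (\<phi> x) (V x) (V' (e x))" using iso by blast
      have "\<phi> x ` V x = V' p" using bij_betw_imp_surj_on[OF bx] eC[OF x] by simp
      then have "\<phi> w z \<in> \<phi> x ` V x" using a by simp
      then obtain g0 where g0': "\<phi> w z = \<phi> x g0" "g0 \<in> V x" by (rule imageE)
      then have g0: "g0 \<in> V x" "\<phi> x g0 = \<phi> w z" by simp_all
      have "lin_on s (V x) (\<phi> x)" using iso by blast
      then have "\<phi> x 0 = 0" using lin0 zero_in by blast
      then have "g0 \<noteq> 0" using g0 a by auto
      then show "\<exists>z\<in>V x. z \<noteq> 0" using g0 by blast
    qed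
  qed
  define ray where "ray y k = (\<lambda>i. if i \<in> J then real k else y i)" for y and k :: nat
  have key: "\<exists>C\<in>\<A>. allnz C \<and> infinite {k. ray y k \<in> C}"
    if ne: "quot_restr_dim s V f J y \<noteq> 0" for y
  proof -
    let ?U = "coset_face J y"
    obtain F m where Fm: "colim_indep s V f ?U F m" "m > 0"
    proof (rule ccontr)
      assume "\<not> thesis"
      then have "\<forall>F m. colim_indep s V f ?U F m \<longrightarrow> m = 0" using that by blast
      then have "colim_dim s V f ?U \<le> 0" unfolding colim_dim_def
        by (intro Sup_least) (auto simp: zero_enat_def)
      then show False using ne unfolding quot_restr_dim_def by simp
    qed
    define S where "S = (\<lambda>(i, j). fst (F i) j) ` ({..<m} \<times> J)"
    define K where "K = nat \<lceil>Max (insert 0 S)\<rceil>"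
    have finS: "finite S" unfolding S_def by auto
    have nzk: "\<exists>z\<in>V (ray y k). z \<noteq> 0" if k: "K \<le> k" for k
    proof -
      define w where "w = ray y k"
      have inU: "\<forall>i<m. fst (F i) \<in> ?U \<and> snd (F i) \<in> V (fst (F i))"
        using Fm(1) unfolding colim_indep_def by blast
      have wU: "w \<in> ?U" unfolding w_def ray_def coset_face_def by auto
      have le: "fst (F i) \<le> w" if i: "i < m" for i
        unfolding le_fun_def
      proof
        fix l
        show "fst (F i) l \<le> w l"
        proof (cases "l \<in> J")
          case True
          have "fst (F i) l \<in> S" unfolding S_def using i True by force
          then have "fst (F i) l \<le> Max (insert 0 S)" using finS by simp
          also have "\<dots> \<le> real K" unfolding K_def by linarith
          also have "\<dots> \<le> real k" using k by simp
          finally show ?thesis unfolding w_def ray_def using True by simp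
        next
          case False
          then show ?thesis using inU i unfolding w_def ray_def coset_face_def by auto
        qed
      qed
      define z where "z = f (fst (F 0)) w (snd (F 0))"
      have fm: "\<forall>x\<in>UNIV. \<forall>y\<in>UNIV. x \<le> y \<longrightarrow> lin_on s (V x) (f x y) \<and> f x y ` V x \<subseteq> V y"
        using pm unfolding pers_module_def by (rule conjunct1[OF conjunct2])
      have "f (fst (F 0)) w ` V (fst (F 0)) \<subseteq> V w" using fm le[OF Fm(2)] by blast
      moreover have "snd (F 0) \<in> V (fst (F 0))" using inU Fm(2) by blast
      ultimately have zV: "z \<in> V w" unfolding z_def by blast
      have "z \<noteq> 0"
      proof
        assume z0: "z = 0"
        define c where "c = (\<lambda>i::nat. if i = 0 then (1::'k) else 0)"
        have "(\<Sum>i<m. s (c i) (f (fst (F i)) w (snd (F i)))) = (\<Sum>i<m. if i = 0 then z else 0)"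
          by (rule sum.cong) (auto simp: c_def z_def)
        also have "\<dots> = 0" using z0 by simp
        finally have sum0: "(\<Sum>i<m. s (c i) (f (fst (F i)) w (snd (F i)))) = 0" .
        have CI: "\<forall>c::nat \<Rightarrow> 'k. (\<exists>w\<in>?U. (\<forall>i<m. fst (F i) \<le> w) \<and>
               (\<Sum>i<m. s (c i) (f (fst (F i)) w (snd (F i)))) = 0) \<longrightarrow> (\<forall>i<m. c i = 0)"
          using Fm(1) unfolding colim_indep_def by (rule conjunct2)
        have "\<exists>w\<in>?U. (\<forall>i<m. fst (F i) \<le> w) \<and> (\<Sum>i<m. s (c i) (f (fst (F i)) w (snd (F i)))) = 0"
          using wU le sum0 by blast
        then have "c 0 = 0" using CI Fm(2) by blast
        then show False unfolding c_def by simp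
      qed
      then show ?thesis using zV unfolding w_def by blast
    qed
    have sub: "{K..} \<subseteq> (\<Union>C\<in>\<A>. {k. ray y k \<in> C \<and> (\<exists>z\<in>V (ray y k). z \<noteq> 0)})"
    proof
      fix k assume "k \<in> {K..}"
      then have nz: "\<exists>z\<in>V (ray y k). z \<noteq> 0" using nzk by simp
      have "ray y k \<in> {x. e x = e (ray y k)}" by simp
      then obtain C where "C \<in> Cs (e (ray y k))" "ray y k \<in> C" using Cs eP by blast
      then show "k \<in> (\<Union>C\<in>\<A>. {k. ray y k \<in> C \<and> (\<exists>z\<in>V (ray y k). z \<noteq> 0)})"
        using nz eP unfolding \<A>_def by blast
    qed
    have "infinite {K..}" by (simp add: infinite_Ici)
    then have "infinite (\<Union>C\<in>\<A>. {k. ray y k \<in> C \<and> (\<exists>z\<in>V (ray y k). z \<noteq> 0)})"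
      using sub finite_subset by blast
    have "\<exists>C\<in>\<A>. infinite {k. ray y k \<in> C \<and> (\<exists>z\<in>V (ray y k). z \<noteq> 0)}"
    proof (rule ccontr)
      assume "\<not> (\<exists>C\<in>\<A>. infinite {k. ray y k \<in> C \<and> (\<exists>z\<in>V (ray y k). z \<noteq> 0)})"
      then have "\<And>C. C \<in> \<A> \<Longrightarrow> finite {k. ray y k \<in> C \<and> (\<exists>z\<in>V (ray y k). z \<noteq> 0)}" by blast
      then have "finite (\<Union>C\<in>\<A>. {k. ray y k \<in> C \<and> (\<exists>z\<in>V (ray y k). z \<noteq> 0)})"
        by (rule finite_UN_I[OF finA])
      then show False using \<open>infinite (\<Union>C\<in>\<A>. {k. ray y k \<in> C \<and> (\<exists>z\<in>V (ray y k). z \<noteq> 0)})\<close> by contradiction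
    qed
    then obtain C where C: "C \<in> \<A>" "infinite {k. ray y k \<in> C \<and> (\<exists>z\<in>V (ray y k). z \<noteq> 0)}"
      by (rule bexE)
    from C(2) have "{k. ray y k \<in> C \<and> (\<exists>z\<in>V (ray y k). z \<noteq> 0)} \<noteq> {}" by (metis finite.emptyI)
    then obtain k where "ray y k \<in> C" "\<exists>z\<in>V (ray y k). z \<noteq> 0" by blast
    then have "allnz C" using spread C(1) by blast
    moreover have "infinite {k. ray y k \<in> C}" using C(2) by (rule infinite_super[rotated]) auto
    ultimately show ?thesis using C(1) by blast
  qed
  let ?M = "PiM (UNIV::'n set) (\<lambda>_. lborel :: real measure)"
  have hfin: "(\<integral>\<^sup>+ x. enat_powr (enat (vs.dim (V x))) p \<partial>?M) \<noteq> \<infinity>"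
  proof
    assume a: "(\<integral>\<^sup>+ x. enat_powr (enat (vs.dim (V x))) p \<partial>?M) = \<infinity>"
    have "hilbert_norm p s V = ennreal_root p (\<integral>\<^sup>+ x. enat_powr (enat (vs.dim (V x))) p \<partial>?M)"
      unfolding hilbert_norm_def Lp_amplitude_def lebesgue_on_coords_def nn_integral_completion ..
    also have "\<dots> = top" unfolding a ennreal_root_def by simp
    finally show False using assms(8) by simp
  qed
  have percube: "AE y in PiM (-J) (\<lambda>_. lborel). \<not> (allnz C \<and> infinite {k. ray y k \<in> C})"
    if CA: "C \<in> \<A>" for C
  proof -
    obtain I where I: "\<forall>i. is_interval (I i)" "C = {x. \<forall>i. x i \<in> I i}"
    proof -
      obtain p0 where p0: "p0 \<in> P" "C \<in> Cs p0" using CA unfolding \<A>_def by (rule UN_E)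
      have "cube C" using Cs p0 by blast
      then show ?thesis unfolding cube_def using that by blast
    qed
    show ?thesis
    proof (cases "\<exists>y0. allnz C \<and> infinite {k. ray y0 k \<in> C}")
      case False
      then show ?thesis by simp
    next
      case True
      then obtain y0 where y0: "allnz C" "infinite {k. ray y0 k \<in> C}" by blast
      have infJ: "infinite {k. real k \<in> I j}" if j: "j \<in> J" for j
        using y0(2) by (rule infinite_super[rotated]) (auto simp: I(2) ray_def j dest: spec[of _ j])
      have measJ: "emeasure lborel (I j) = \<infinity>" if "j \<in> J" for j
        using interval_inf_measure I(1) infJ that by blast
      have "\<exists>i\<in>-J. emeasure lborel (I i) = 0"
      proof (rule ccontr)
        assume "\<not> (\<exists>i\<in>-J. emeasure lborel (I i) = 0)"
        then have nz: "emeasure lborel (I i) \<noteq> 0" for i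
          using measJ by (cases "i \<in> J") auto
        have Ceq: "C = PiE UNIV I" unfolding I(2) PiE_UNIV_domain by auto
        have Cs': "C \<in> sets ?M" unfolding Ceq using I(1) real_interval_borel_measurable
          by (intro sets_PiM_I_finite) auto
        have "emeasure ?M C = (\<Prod>i\<in>UNIV. emeasure lborel (I i))"
          unfolding Ceq using box_emeasure I(1) by blast
        also have "\<dots> = \<infinity>"
        proof -
          obtain j0 where j0: "j0 \<in> J" using Jne by blast
          have "(\<Prod>i\<in>UNIV. emeasure lborel (I i)) = top"
            unfolding ennreal_prod_eq_top
            using nz measJ[OF j0] by (auto simp: infinity_ennreal_def)
          then show ?thesis by (simp add: infinity_ennreal_def)
        qed
        finally have Cinf: "emeasure ?M C = \<infinity>" .
        have "(\<integral>\<^sup>+ x. indicator C x \<partial>?M) \<le> (\<integral>\<^sup>+ x. enat_powr (enat (vs.dim (V x))) p \<partial>?M)"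
        proof (rule nn_integral_mono)
          fix x
          show "indicator C x \<le> enat_powr (enat (vs.dim (V x))) p"
          proof (cases "x \<in> C")
            case True
            then obtain z where "z \<in> V x" "z \<noteq> 0" using y0(1) unfolding allnz_def by blast
            then have "1 \<le> vs.dim (V x)" using nz_dim[OF assms(1) fdV] by blast
            then have "1 \<le> real (vs.dim (V x)) powr p" using assms(4)
              by (intro ge_one_powr_ge_zero) auto
            then show ?thesis using True unfolding enat_powr_def by simp
          qed simp
        qed
        then show False using Cinf Cs' hfin by (simp add: top_unique)
      qed
      then obtain i0 where i0: "i0 \<notin> J" "emeasure lborel (I i0) = 0" by blast
      have finJ: "finite (-J)" by simp
      have null: "PiE (-J) I \<in> null_sets (PiM (-J) (\<lambda>_. lborel))"
      proof
        show "PiE (-J) I \<in> sets (PiM (-J) (\<lambda>_. lborel))"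
          using I(1) real_interval_borel_measurable by (intro sets_PiM_I_finite) auto
        have "emeasure (PiM (-J) (\<lambda>_. lborel)) (PiE (-J) I) = (\<Prod>i\<in>-J. emeasure lborel (I i))"
          using box_emeasure I(1) by blast
        also have "\<dots> = 0" using i0 by (intro prod_zero) auto
        finally show "emeasure (PiM (-J) (\<lambda>_. lborel)) (PiE (-J) I) = 0" .
      qed
      show ?thesis
        using AE_not_in[OF null] AE_space
      proof (eventually_elim)
        case (elim y)
        show ?case
        proof
          assume a: "allnz C \<and> infinite {k. ray y k \<in> C}"
          then obtain k where "ray y k \<in> C"
            by (metis (no_types, lifting) empty_Collect_eq finite.emptyI)
          then have rk: "\<forall>i. ray y k i \<in> I i" unfolding I(2) by simp
          have "\<forall>i\<in>-J. y i \<in> I i"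
          proof
            fix i assume "i \<in> -J"
            then have "ray y k i = y i" unfolding ray_def by simp
            then show "y i \<in> I i" using rk by metis
          qed
          then have "y \<in> PiE (-J) I" using elim(2) by (auto simp: space_PiM PiE_iff)
          then show False using elim(1) by blast
        qed
      qed
    qed
  qed
  have AEall: "AE y in PiM (-J) (\<lambda>_. lborel). \<forall>C\<in>\<A>. \<not> (allnz C \<and> infinite {k. ray y k \<in> C})"
    using finA percube by (rule AE_finite_allI)
  have AE0: "AE y in PiM (-J) (\<lambda>_. lborel). enat_powr (quot_restr_dim s V f J y) q = 0"
    using AEall
  proof (eventually_elim)
    case (elim y)
    then have "quot_restr_dim s V f J y = 0" using key by blast
    then show ?case unfolding enat_powr_def zero_enat_def by simp
  qed
  have "(\<integral>\<^sup>+ y. enat_powr (quot_restr_dim s V f J y) q \<partial>PiM (-J) (\<lambda>_. lborel)) = (\<integral>\<^sup>+ y. 0 \<partial>PiM (-J) (\<lambda>_. lborel :: real measure))"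
    by (intro nn_integral_cong_AE) (use AE0 in simp)
  moreover have "(\<integral>\<^sup>+ y. 0 \<partial>PiM (-J) (\<lambda>_. lborel :: real measure)) = 0" by simp
  ultimately have int0: "(\<integral>\<^sup>+ y. enat_powr (quot_restr_dim s V f J y) q \<partial>PiM (-J) (\<lambda>_. lborel)) = 0"
    by (rule trans)
  have "quot_hilbert_norm q s V f J =
      ennreal_root q (\<integral>\<^sup>+ y. enat_powr (quot_restr_dim s V f J y) q \<partial>PiM (-J) (\<lambda>_. lborel))"
    unfolding quot_hilbert_norm_def Lp_amplitude_def lebesgue_on_coords_def nn_integral_completion ..
  also have "\<dots> = ennreal_root q 0" unfolding int0 ..
  also have "\<dots> = 0" unfolding ennreal_root_def by simp
  finally show ?thesis .
qed

end
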